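(* Let $C=w_1-\dots-w_m$ be a chain with positive weights and let $C=C_1-\dots-C_{p+1}$ be a decomposition of $C$ (given by $0=i_0<i_1<\dots<i_p<i_{p+1}=m$) into subchains each of which is extremal. If the gluing conditions $$\Delta_j\ge 0\ \text{for all } j \text{ with } i_j \text{ odd},\qquad \Delta_j\le 0\ \text{for all } j\text{ with } i_j\text{ even}$$ hold ($1\le j\le p$), then $L_1(C)=\sum_{j=1}^{p+1}L_1(C_j)=\sum_{j=1}^{p+1}L_\emptyset(C_j)$.
   Context: For a chain $C'=v_1-\dots-v_r$ with $r\ge 2$ edges and positive weights: $L_1(C')=\max\{\sum_{i=1}^r v_ix_i : x\in\mathbb{R}^r,\ x_i^2+x_{i+1}^2\le 1\ \forall\,1\le i\le r-1\}$; $L_\emptyset(C')=\sqrt{(\sum_{i\text{ odd}}v_i)^2+(\sum_{i\text{ even}}v_i)^2}$; $C'$ is extremal if $L_1(C')=L_\emptyset(C')$ (extremality is only defined for chains with at least two edges). The subchains are $C_j=w_{i_{j-1}+1}-\dots-w_{i_j}$. Let $\tilde\Sigma_{\rm odd}(C_j)=\sum\{w_i : i_{j-1}<i\le i_j,\ i\text{ odd}\}$, $\tilde\Sigma_{\rm even}(C_j)=\sum\{w_i : i_{j-1}<i\le i_j,\ i\text{ even}\}$ (parity with respect to the numbering in $C$), and $\Delta_j=\tilde\Sigma_{\rm even}(C_j)\tilde\Sigma_{\rm odd}(C_{j+1})-\tilde\Sigma_{\rm even}(C_{j+1})\tilde\Sigma_{\rm odd}(C_j)$ for $1\le j\le p$.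 *)

theory Defs
  imports Complex_Main
begin

text \<open>A chain with r edges is given by weights v 1, ..., v r (a function nat => real,
  only the values at 1..r matter).\<close>

definition L1 :: "(nat \<Rightarrow> real) \<Rightarrow> nat \<Rightarrow> real" where
  "L1 v r = Sup ((\<lambda>x. \<Sum>k=1..r. v k * x k) `
      {x :: nat \<Rightarrow> real. \<forall>k\<in>{1..<r}. (x k)^2 + (x (Suc k))^2 \<le> 1})"

definition Lempty :: "(nat \<Rightarrow> real) \<Rightarrow> nat \<Rightarrow> real" where
  "Lempty v r = sqrt ((\<Sum>k\<in>{k\<in>{1..r}. odd k}. v k)^2 + (\<Sum>k\<in>{k\<in>{1..r}. even k}. v k)^2)"

definition extremal :: "(nat \<Rightarrow> real) \<Rightarrow> nat \<Rightarrow> bool" where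
  "extremal v r \<longleftrightarrow> r \<ge> 2 \<and> L1 v r = Lempty v r"

definition subchain :: "(nat \<Rightarrow> real) \<Rightarrow> (nat \<Rightarrow> nat) \<Rightarrow> nat \<Rightarrow> (nat \<Rightarrow> real)" where
  "subchain w i j = (\<lambda>k. w (i (j - 1) + k))"

definition sublen :: "(nat \<Rightarrow> nat) \<Rightarrow> nat \<Rightarrow> nat" where
  "sublen i j = i j - i (j - 1)"

text \<open>Parity with respect to the numbering in the whole chain C.\<close>

definition SigOdd :: "(nat \<Rightarrow> real) \<Rightarrow> (nat \<Rightarrow> nat) \<Rightarrow> nat \<Rightarrow> real" where
  "SigOdd w i j = (\<Sum>k\<in>{k\<in>{i (j - 1)<..i j}. odd k}. w k)"

definition SigEven :: "(nat \<Rightarrow> real) \<Rightarrow> (nat \<Rightarrow> nat) \<Rightarrow> nat \<Rightarrow> real" where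
  "SigEven w i j = (\<Sum>k\<in>{k\<in>{i (j - 1)<..i j}. even k}. w k)"

definition Delta :: "(nat \<Rightarrow> real) \<Rightarrow> (nat \<Rightarrow> nat) \<Rightarrow> nat \<Rightarrow> real" where
  "Delta w i j = SigEven w i j * SigOdd w i (j + 1) - SigEven w i (j + 1) * SigOdd w i j"

end

theory Submission imports Defs begin
lemma L1_bdd:
  assumes "r \<ge> 2"
  shows "bdd_above ((\<lambda>x. \<Sum>k=1..r. v k * x k) ` {x :: nat \<Rightarrow> real. \<forall>k\<in>{1..<r}. (x k)^2 + (x (Suc k))^2 \<le> 1})"
proof (rule bdd_aboveI[where M="\<Sum>k=1..r. \<bar>v k\<bar>"])
  fix y assume "y \<in> (\<lambda>x. \<Sum>k=1..r. v k * x k) ` {x :: nat \<Rightarrow> real. \<forall>k\<in>{1..<r}. (x k)^2 + (x (Suc k))^2 \<le> 1}"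
  then obtain x where y: "y = (\<Sum>k=1..r. v k * x k)" and x: "\<forall>k\<in>{1..<r}. (x k)^2 + (x (Suc k))^2 \<le> 1" by auto
  have "v k * x k \<le> \<bar>v k\<bar>" if k: "k \<in> {1..r}" for k
  proof -
    have "(x k)^2 \<le> 1"
    proof (cases "k < r")
      case True
      then have "(x k)^2 + (x (Suc k))^2 \<le> 1" using x k by auto
      then show ?thesis using zero_le_power2[of "x (Suc k)"] by linarith
    next
      case False
      then have kr: "k = Suc (r - 1)" using k assms by auto
      have "r - 1 \<in> {1..<r}" using assms by auto
      then have "(x (r-1))^2 + (x (Suc (r-1)))^2 \<le> 1" using x by blast
      then have "(x (Suc (r-1)))^2 \<le> 1" using zero_le_power2[of "x (r-1)"] by linarith
      then show ?thesis using kr by simp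
    qed
    then have "\<bar>x k\<bar> \<le> 1" by (simp add: abs_square_le_1)
    then have "\<bar>v k\<bar> * \<bar>x k\<bar> \<le> \<bar>v k\<bar> * 1" by (intro mult_left_mono) auto
    moreover have "v k * x k \<le> \<bar>v k * x k\<bar>" by (rule abs_ge_self)
    ultimately show ?thesis by (simp add: abs_mult)
  qed
  then show "y \<le> (\<Sum>k=1..r. \<bar>v k\<bar>)" unfolding y by (intro sum_mono) auto
qed

lemma L1_upper:
  assumes "r \<ge> 2" "\<forall>k\<in>{1..<r}. (x k)^2 + (x (Suc k))^2 \<le> 1"
  shows "(\<Sum>k=1..r. v k * x k) \<le> L1 v r"
  unfolding L1_def using assms by (intro cSup_upper L1_bdd) auto

lemma L1_least:
  assumes "\<And>x. \<forall>k\<in>{1..<r}. (x k)^2 + (x (Suc k))^2 \<le> 1 \<Longrightarrow> (\<Sum>k=1..r. v k * x k) \<le> z"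
  shows "L1 v r \<le> z"
  unfolding L1_def
proof (rule cSup_least)
  let ?S = "{x :: nat \<Rightarrow> real. \<forall>k\<in>{1..<r}. (x k)^2 + (x (Suc k))^2 \<le> 1}"
  have "(\<lambda>_. 0::real) \<in> ?S" by simp
  then have "?S \<noteq> {}" by (rule ex_in_conv[THEN iffD1, OF exI])
  then show "(\<lambda>x. \<Sum>k=1..r. v k * x k) ` ?S \<noteq> {}" by simp
next
  fix y assume "y \<in> (\<lambda>x. \<Sum>k=1..r. v k * x k) ` {x. \<forall>k\<in>{1..<r}. (x k)^2 + (x (Suc k))^2 \<le> 1}"
  then obtain x where "y = (\<Sum>k=1..r. v k * x k)" "\<forall>k\<in>{1..<r}. (x k)^2 + (x (Suc k))^2 \<le> 1" by blast
  then show "y \<le> z" using assms by simp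
qed

lemma strict_i:
  assumes incr: "\<forall>j\<le>p. i j < i (Suc j)"
  shows "j < j' \<Longrightarrow> j' \<le> p+1 \<Longrightarrow> (i j :: nat) < i j'"
proof (induction j')
  case 0 then show ?case by simp
next
  case (Suc j')
  have "i j' < i (Suc j')" using incr Suc.prems by auto
  then show ?case using Suc by (cases "j = j'") auto
qed

lemma mono_i:
  assumes incr: "\<forall>j\<le>p. i j < i (Suc j)"
  shows "j \<le> j' \<Longrightarrow> j' \<le> p+1 \<Longrightarrow> (i j :: nat) \<le> i j'"
  using strict_i[OF incr, of j j'] by (cases "j = j'") auto

lemma split_sum:
  fixes i :: "nat \<Rightarrow> nat"
  assumes incr: "\<forall>j\<le>p. i j < i (Suc j)"
  shows "q \<le> p+1 \<Longrightarrow> (\<Sum>k\<in>{i 0<..i q}. f k) = (\<Sum>j=1..q. \<Sum>l\<in>{i(j-1)<..i j}. f l)"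
proof (induction q)
  case 0 then show ?case by auto
next
  case (Suc q)
  have a: "i 0 \<le> i q" "i q \<le> i (Suc q)" using mono_i[OF incr] Suc.prems by auto
  have "{i 0<..i (Suc q)} = {i 0<..i q} \<union> {i q<..i (Suc q)}" using a by auto
  then have "(\<Sum>k\<in>{i 0<..i (Suc q)}. f k) = (\<Sum>k\<in>{i 0<..i q}. f k) + (\<Sum>k\<in>{i q<..i (Suc q)}. f k)"
    by (simp add: sum.union_disjoint ivl_disj_int)
  then show ?case using Suc by simp
qed

lemma reindex_filter:
  fixes a n :: nat
  shows   "(\<Sum>k\<in>{k\<in>{1..n}. P k}. g (a+k)) = (\<Sum>l\<in>{l\<in>{a<..a+n}. P (l-a)}. (g l :: real))"
proof -
  have "(\<lambda>k. a+k) ` {k\<in>{1..n}. P k} = {l\<in>{a<..a+n}. P (l-a)}"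
  proof
    show "{l\<in>{a<..a+n}. P (l-a)} \<subseteq> (\<lambda>k. a+k) ` {k\<in>{1..n}. P k}"
    proof
      fix l assume "l \<in> {l\<in>{a<..a+n}. P (l-a)}"
      then have "l = a + (l-a)" "l-a \<in> {k\<in>{1..n}. P k}" by auto
      then show "l \<in> (\<lambda>k. a+k) ` {k\<in>{1..n}. P k}" by (metis image_eqI)
    qed
  qed auto
  moreover have "inj_on (\<lambda>k. a+k) {k\<in>{1..n}. P k}" by (auto simp: inj_on_def)
  ultimately show ?thesis using sum.reindex[of "\<lambda>k. a+k" "{k\<in>{1..n}. P k}" g] by (simp add: o_def)
qed

lemma ineq1:
  fixes a b c d :: real
  assumes "a \<ge> 0" "b \<ge> 0" "c \<ge> 0" "d \<ge> 0" "a^2+b^2 > 0" "c^2+d^2>0" "d*a \<le> b*c"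
  shows "a^2/(a^2+b^2) + d^2/(c^2+d^2) \<le> 1"
proof -
  have "(d*a)^2 \<le> (b*c)^2" using assms by (intro power_mono) auto
  then have "a^2*(c^2+d^2) + d^2*(a^2+b^2) \<le> (a^2+b^2)*(c^2+d^2)" by (simp add: power_mult_distrib algebra_simps)
  moreover have "a^2+b^2 \<noteq> 0" "c^2+d^2 \<noteq> 0" using assms by auto
  moreover have "a^2/(a^2+b^2) + d^2/(c^2+d^2) = (a^2*(c^2+d^2) + d^2*(a^2+b^2)) / ((a^2+b^2)*(c^2+d^2))"
    using calculation(2,3) by (simp add: field_simps)
  moreover have "(a^2+b^2)*(c^2+d^2) > 0" using assms by simp
  ultimately show ?thesis by simp
qed

lemma Lempty_sub:
  fixes i :: "nat \<Rightarrow> nat"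
  assumes "i (j-1) \<le> i j"
  shows "Lempty (subchain w i j) (sublen i j) = sqrt ((SigOdd w i j)^2 + (SigEven w i j)^2)"
proof -
  define a where "a = i (j-1)"
  define n where "n = i j - a"
  have an: "a + n = i j" using assms unfolding a_def n_def by simp
  have r1: "(\<Sum>k\<in>{k\<in>{1..n}. odd k}. w (a+k)) = (\<Sum>l\<in>{l\<in>{a<..i j}. odd (l-a)}. w l)"
    using reindex_filter[where P=odd and n=n and g=w and a=a] an by simp
  have r2: "(\<Sum>k\<in>{k\<in>{1..n}. even k}. w (a+k)) = (\<Sum>l\<in>{l\<in>{a<..i j}. even (l-a)}. w l)"
    using reindex_filter[where P=even and n=n and g=w and a=a] an by simp
  have L: "Lempty (subchain w i j) (sublen i j) = sqrt ((\<Sum>l\<in>{l\<in>{a<..i j}. odd (l-a)}. w l)^2 + (\<Sum>l\<in>{l\<in>{a<..i j}. even (l-a)}. w l)^2)"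
    unfolding Lempty_def subchain_def sublen_def using r1 r2 unfolding a_def n_def by simp
  show ?thesis
  proof (cases "even a")
    case True
    then have "{l\<in>{a<..i j}. odd (l-a)} = {l\<in>{a<..i j}. odd l}" "{l\<in>{a<..i j}. even (l-a)} = {l\<in>{a<..i j}. even l}"
      by auto
    then show ?thesis using L unfolding SigOdd_def SigEven_def a_def by simp
  next
    case False
    then have "{l\<in>{a<..i j}. odd (l-a)} = {l\<in>{a<..i j}. even l}" "{l\<in>{a<..i j}. even (l-a)} = {l\<in>{a<..i j}. odd l}"
      by auto
    then show ?thesis using L unfolding SigOdd_def SigEven_def a_def by (simp add: add.commute)
  qed
qed

lemma reindex_plain:
  fixes a n :: nat
  shows "(\<Sum>k=1..n. g (a+k)) = (\<Sum>l\<in>{a<..a+n}. (g l::real))"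
proof -
  have e: "{a<..a+n} = {1+a..n+a}" by auto
  have "(\<Sum>l\<in>{1+a..n+a}. g l) = (\<Sum>k=1..n. g (k+a))" by (rule sum.shift_bounds_cl_nat_ivl)
  then show ?thesis by (simp add: e add.commute)
qed

theorem mainTheorem10:
  fixes w :: "nat \<Rightarrow> real" and m p :: nat and i :: "nat \<Rightarrow> nat"
  assumes pos: "\<forall>k\<in>{1..m}. w k > 0"
    and i0: "i 0 = 0" and iend: "i (p + 1) = m"
    and incr: "\<forall>j\<le>p. i j < i (Suc j)"
    and ext: "\<forall>j\<in>{1..p+1}. extremal (subchain w i j) (sublen i j)"
    and glue_odd: "\<forall>j\<in>{1..p}. odd (i j) \<longrightarrow> Delta w i j \<ge> 0"
    and glue_even: "\<forall>j\<in>{1..p}. even (i j) \<longrightarrow> Delta w i j \<le> 0"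
  shows "L1 w m = (\<Sum>j=1..p+1. L1 (subchain w i j) (sublen i j))
       \<and> (\<Sum>j=1..p+1. L1 (subchain w i j) (sublen i j))
           = (\<Sum>j=1..p+1. Lempty (subchain w i j) (sublen i j))"
proof -
  have mono: "\<And>j j'. j \<le> j' \<Longrightarrow> j' \<le> p+1 \<Longrightarrow> i j \<le> i j'" using mono_i[OF incr] by blast
  have lenS: "\<And>j. j\<in>{1..p+1} \<Longrightarrow> sublen i j \<ge> 2" using ext by (simp add: extremal_def)
  have len: "i(j-1) + 2 \<le> i j" if "j\<in>{1..p+1}" for j
    using lenS[OF that] mono[of "j-1" j] that unfolding sublen_def by auto
  have le_m: "\<And>j. j \<le> p+1 \<Longrightarrow> i j \<le> m" using mono iend by auto
  have m2: "m \<ge> 2" using len[of 1] le_m[of 1] i0 by auto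
  have ivl: "{1..m} = {i 0<..i (p+1)}" using i0 iend by auto
  define Od where "Od j = SigOdd w i j" for j
  define Ev where "Ev j = SigEven w i j" for j
  define Nn where "Nn j = sqrt ((Od j)^2 + (Ev j)^2)" for j
  have Onn: "Od j \<ge> 0" if j: "j\<in>{1..p+1}" for j
    unfolding Od_def SigOdd_def
  proof (rule sum_nonneg)
    fix l assume "l \<in> {k \<in> {i (j - 1)<..i j}. odd k}"
    then show "w l \<ge> 0" using pos le_m[of j] j by (auto intro: less_imp_le)
  qed
  have Enn: "Ev j \<ge> 0" if j: "j\<in>{1..p+1}" for j
    unfolding Ev_def SigEven_def
  proof (rule sum_nonneg)
    fix l assume "l \<in> {k \<in> {i (j - 1)<..i j}. even k}"
    then show "w l \<ge> 0" using pos le_m[of j] j by (auto intro: less_imp_le)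
  qed
  have Opos: "Od j > 0" if j: "j\<in>{1..p+1}" for j
  proof -
    define l where "l = (if odd (i (j-1) + 1) then i (j-1) + 1 else i (j-1) + 2)"
    have l: "l \<in> {k \<in> {i (j - 1)<..i j}. odd k}" using len[OF j] unfolding l_def by auto
    have "l \<le> m" using l le_m[of j] j by auto
    then have "w l > 0" using pos l by auto
    moreover have "\<forall>k\<in>{k \<in> {i (j - 1)<..i j}. odd k}. w k \<ge> 0"
      using pos le_m[of j] j by (auto intro: less_imp_le)
    ultimately show ?thesis unfolding Od_def SigOdd_def
      using sum_pos2[OF _ l, of w] by auto
  qed
  have Npos: "Nn j > 0" if "j\<in>{1..p+1}" for j
    using Opos[OF that] unfolding Nn_def by (simp add: add_pos_nonneg)
  have Nsq: "(Nn j)^2 = (Od j)^2 + (Ev j)^2" for j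
    unfolding Nn_def by simp
  have Lemp: "Lempty (subchain w i j) (sublen i j) = Nn j" if "j\<in>{1..p+1}" for j
    using Lempty_sub[of i j w] mono[of "j-1" j] that unfolding Nn_def Od_def Ev_def by auto
  have L1eq: "L1 (subchain w i j) (sublen i j) = Nn j" if "j\<in>{1..p+1}" for j
    using ext Lemp[OF that] that by (auto simp: extremal_def)
  have Lsum: "(\<Sum>j=1..p+1. L1 (subchain w i j) (sublen i j)) = (\<Sum>j=1..p+1. Lempty (subchain w i j) (sublen i j))"
    using L1eq Lemp by (intro sum.cong) auto
  have up: "L1 w m \<le> (\<Sum>j=1..p+1. L1 (subchain w i j) (sublen i j))"
  proof (rule L1_least)
    fix x :: "nat \<Rightarrow> real" assume x: "\<forall>k\<in>{1..<m}. (x k)^2 + (x (Suc k))^2 \<le> 1"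
    have "(\<Sum>k=1..m. w k * x k) = (\<Sum>k\<in>{i 0<..i(p+1)}. w k * x k)" using ivl by simp
    also have "\<dots> = (\<Sum>j=1..p+1. \<Sum>l\<in>{i(j-1)<..i j}. w l * x l)" by (rule split_sum[OF incr]) simp
    also have "\<dots> \<le> (\<Sum>j=1..p+1. L1 (subchain w i j) (sublen i j))"
    proof (rule sum_mono)
      fix j assume j: "j \<in> {1..p+1}"
      define a where "a = i (j-1)"
      have aj: "a + sublen i j = i j" using mono[of "j-1" j] j unfolding a_def sublen_def by auto
      have "(\<Sum>l\<in>{i(j-1)<..i j}. w l * x l) = (\<Sum>k=1..sublen i j. subchain w i j k * x (a+k))"
        using reindex_plain[where n="sublen i j" and a=a and g="\<lambda>l. w l * x l"] aj
        unfolding subchain_def a_def by simp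
      also have "\<dots> \<le> L1 (subchain w i j) (sublen i j)"
      proof (rule L1_upper)
        show "2 \<le> sublen i j" using lenS[OF j] .
        show "\<forall>k\<in>{1..<sublen i j}. (x (a+k))^2 + (x (a + Suc k))^2 \<le> 1"
        proof
          fix k assume "k \<in> {1..<sublen i j}"
          then have "a + k \<in> {1..<m}" using aj le_m[of j] j by auto
          then show "(x (a+k))^2 + (x (a + Suc k))^2 \<le> 1" using x by simp
        qed
      qed
      finally show "(\<Sum>l\<in>{i(j-1)<..i j}. w l * x l) \<le> L1 (subchain w i j) (sublen i j)" .
    qed
    finally show "(\<Sum>k=1..m. w k * x k) \<le> (\<Sum>j=1..p+1. L1 (subchain w i j) (sublen i j))" .
  qed
  define J where "J l = (LEAST j. l \<le> i j)" for l
  have Jeq: "J l = j" if j: "j\<in>{1..p+1}" "i(j-1) < l" "l \<le> i j" for j l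
    unfolding J_def
  proof (rule Least_equality)
    show "l \<le> i j" using j by simp
    fix y assume y: "l \<le> i y"
    show "j \<le> y"
    proof (rule ccontr)
      assume "\<not> j \<le> y"
      then have "i y \<le> i (j-1)" using mono[of y "j-1"] j by auto
      then show False using y j by auto
    qed
  qed
  have Jex: "\<exists>j\<in>{1..p+1}. i(j-1) < l \<and> l \<le> i j" if l: "0 < l" "l \<le> m" for l
  proof -
    define j where "j = (LEAST j. l \<le> i j)"
    have lj: "l \<le> i j" unfolding j_def using LeastI[of "\<lambda>j. l \<le> i j" "p+1"] iend l by auto
    have jp: "j \<le> p+1" unfolding j_def using Least_le[of "\<lambda>j. l \<le> i j" "p+1"] iend l by auto
    have j0: "j \<noteq> 0" using lj i0 l by (cases "j = 0") auto
    have "\<not> l \<le> i (j-1)" unfolding j_def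
      by (rule not_less_Least) (use j0 in \<open>auto simp: j_def\<close>)
    then show ?thesis using lj jp j0 by (intro bexI[of _ j]) auto
  qed
  define x where "x l = (if odd l then Od (J l) / Nn (J l) else Ev (J l) / Nn (J l))" for l
  have unit: "(Od j / Nn j)^2 + (Ev j / Nn j)^2 = 1" if "j\<in>{1..p+1}" for j
  proof -
    have "(Od j / Nn j)^2 + (Ev j / Nn j)^2 = ((Od j)^2 + (Ev j)^2) / (Nn j)^2"
      by (simp add: power_divide add_divide_distrib)
    then show ?thesis using Nsq[of j] Npos[OF that] Opos[OF that] by simp
  qed
  have feas: "\<forall>k\<in>{1..<m}. (x k)^2 + (x (Suc k))^2 \<le> 1"
  proof
    fix k assume k: "k\<in>{1..<m}"
    obtain j where j: "j\<in>{1..p+1}" "i(j-1) < k" "k \<le> i j" using Jex[of k] k by auto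
    show "(x k)^2 + (x (Suc k))^2 \<le> 1"
    proof (cases "k < i j")
      case True
      then have "J k = j" "J (Suc k) = j" using Jeq j by auto
      then show ?thesis using unit[OF j(1)] by (cases "odd k") (auto simp: x_def add.commute)
    next
      case False
      then have kj: "k = i j" using j by auto
      have jp: "j \<le> p" using kj k iend j(1) by (cases "j = p+1") auto
      have Jk: "J k = j" using Jeq j by auto
      have "i j < i (Suc j)" using incr jp by auto
      then have JS: "J (Suc k) = Suc j" using Jeq[of "Suc j" "Suc k"] jp kj by auto
      have D: "Delta w i j = Ev j * Od (j+1) - Ev (j+1) * Od j"
        unfolding Delta_def Od_def Ev_def by simp
      have j1: "Suc j \<in> {1..p+1}" using jp by auto
      have jj: "j \<in> {1..p}" using jp j(1) by auto
      have sq1: "(Od j / Nn j)^2 = (Od j)^2 / ((Od j)^2 + (Ev j)^2)"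
        by (simp add: power_divide Nsq)
      have sq2: "(Ev j / Nn j)^2 = (Ev j)^2 / ((Ev j)^2 + (Od j)^2)"
        by (simp add: power_divide Nsq add.commute)
      have sq3: "(Od (Suc j) / Nn (Suc j))^2 = (Od (Suc j))^2 / ((Ev (Suc j))^2 + (Od (Suc j))^2)"
        by (simp add: power_divide Nsq add.commute)
      have sq4: "(Ev (Suc j) / Nn (Suc j))^2 = (Ev (Suc j))^2 / ((Od (Suc j))^2 + (Ev (Suc j))^2)"
        by (simp add: power_divide Nsq)
      have p1: "(Od j)^2 + (Ev j)^2 > 0" "(Ev j)^2 + (Od j)^2 > 0"
        using Opos[OF j(1)] by (simp_all add: add_pos_nonneg add_nonneg_pos)
      have p2: "(Od (Suc j))^2 + (Ev (Suc j))^2 > 0" "(Ev (Suc j))^2 + (Od (Suc j))^2 > 0"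
        using Opos[OF j1] by (simp_all add: add_pos_nonneg add_nonneg_pos)
      show ?thesis
      proof (cases "odd k")
        case True
        then have "Delta w i j \<ge> 0" using glue_odd jj kj by auto
        then have "Ev (Suc j) * Od j \<le> Ev j * Od (Suc j)" using D by simp
        then have "(Od j)^2 / ((Od j)^2 + (Ev j)^2) + (Ev (Suc j))^2 / ((Od (Suc j))^2 + (Ev (Suc j))^2) \<le> 1"
          using ineq1[of "Od j" "Ev j" "Od (Suc j)" "Ev (Suc j)"] Onn[OF j(1)] Enn[OF j(1)] Onn[OF j1] Enn[OF j1] p1 p2
          by auto
        then show ?thesis using True Jk JS sq1 sq4 by (simp add: x_def)
      next
        case False
        then have "Delta w i j \<le> 0" using glue_even jj kj by auto
        then have "Od (Suc j) * Ev j \<le> Od j * Ev (Suc j)" using D by (simp add: mult.commute)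
        then have "(Ev j)^2 / ((Ev j)^2 + (Od j)^2) + (Od (Suc j))^2 / ((Ev (Suc j))^2 + (Od (Suc j))^2) \<le> 1"
          using ineq1[of "Ev j" "Od j" "Ev (Suc j)" "Od (Suc j)"] Onn[OF j(1)] Enn[OF j(1)] Onn[OF j1] Enn[OF j1] p1 p2
          by auto
        then show ?thesis using False Jk JS sq2 sq3 by (simp add: x_def)
      qed
    qed
  qed
  have val: "(\<Sum>k=1..m. w k * x k) = (\<Sum>j=1..p+1. Nn j)"
  proof -
    have "(\<Sum>k=1..m. w k * x k) = (\<Sum>k\<in>{i 0<..i(p+1)}. w k * x k)" using ivl by simp
    also have "\<dots> = (\<Sum>j=1..p+1. \<Sum>l\<in>{i(j-1)<..i j}. w l * x l)" by (rule split_sum[OF incr]) simp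
    also have "\<dots> = (\<Sum>j=1..p+1. Nn j)"
    proof (rule sum.cong)
      fix j assume j: "j \<in> {1..p+1}"
      let ?S = "{i(j-1)<..i j}"
      have "(\<Sum>l\<in>?S. w l * x l) = (\<Sum>l\<in>?S. if odd l then w l * (Od j / Nn j) else w l * (Ev j / Nn j))"
        using Jeq[OF j] by (intro sum.cong) (auto simp: x_def)
      also have "\<dots> = (\<Sum>l\<in>?S \<inter> {l. odd l}. w l * (Od j / Nn j)) + (\<Sum>l\<in>?S \<inter> - {l. odd l}. w l * (Ev j / Nn j))"
        by (rule sum.If_cases[where A="?S" and P=odd and h="\<lambda>l. w l * (Od j / Nn j)" and g="\<lambda>l. w l * (Ev j / Nn j)"]) simp
      also have "\<dots> = Od j * (Od j / Nn j) + Ev j * (Ev j / Nn j)"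
      proof -
        have e1: "?S \<inter> {l. odd l} = {k\<in>?S. odd k}" "?S \<inter> - {l. odd l} = {k\<in>?S. even k}" by auto
        have o: "Od j = (\<Sum>l\<in>{k\<in>?S. odd k}. w l)" unfolding Od_def SigOdd_def ..
        have e: "Ev j = (\<Sum>l\<in>{k\<in>?S. even k}. w l)" unfolding Ev_def SigEven_def ..
        have d1: "(\<Sum>l\<in>{k\<in>?S. odd k}. w l * (Od j / Nn j)) = Od j * (Od j / Nn j)"
          unfolding o[symmetric] sum_distrib_right[symmetric] ..
        have d2: "(\<Sum>l\<in>{k\<in>?S. even k}. w l * (Ev j / Nn j)) = Ev j * (Ev j / Nn j)"
          unfolding e[symmetric] sum_distrib_right[symmetric] ..
        show ?thesis unfolding e1 d1 d2 ..
      qed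
      also have "\<dots> = ((Od j)^2 + (Ev j)^2) / Nn j" by (simp add: power2_eq_square add_divide_distrib)
      also have "\<dots> = (Nn j)^2 / Nn j" by (simp only: Nsq)
      also have "\<dots> = Nn j" using Npos[OF j] by (simp add: power2_eq_square)
      finally show "(\<Sum>l\<in>?S. w l * x l) = Nn j" .
    qed simp
    finally show ?thesis .
  qed
  have low: "(\<Sum>j=1..p+1. Nn j) \<le> L1 w m"
    using L1_upper[OF m2 feas, of w] val by simp
  have "(\<Sum>j=1..p+1. L1 (subchain w i j) (sublen i j)) = (\<Sum>j=1..p+1. Nn j)"
    using L1eq by (intro sum.cong) auto
  then show ?thesis using up low Lsum by simp
qed

end
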